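(* Let $n=p_1^{\alpha_1}p_2^{\alpha_2}\cdots p_r^{\alpha_r}$, where $r\geq 2$, $\alpha_1,\ldots,\alpha_r$ are positive integers and $p_1<p_2<\cdots<p_r$ are primes. Suppose that at least one of the following holds: (i) $2\phi(p_1p_2\cdots p_r)\geq p_1p_2\cdots p_r$; (ii) $\phi(p_{i+1})\geq r\,\phi(p_i)$ for each $i\in\{1,2,\ldots,r-1\}$. Let $t\in\{2,3,\ldots,r\}$ be the largest integer such that $\alpha_t\geq\alpha_j$ for all $2\leq j\leq r$. Then $$\delta(\mathcal{P}(C_n))=\min\{\deg(p_s^{\alpha_s}) : t\leq s\leq r\}.$$
   Context: For a finite group $G$, the power graph $\mathcal{P}(G)$ is the simple undirected graph with vertex set $G$ in which two distinct vertices are adjacent if one is an integral power of the other. $C_n$ denotes the cyclic group of order $n$, identified with $\mathbb{Z}_n=\{0,1,\ldots,n-1\}$, so a positive divisor $d<n$ of $n$ is regarded as the element $d\in\mathbb{Z}_n$. $\deg(a)$ is the degree of vertex $a$ in $\mathcal{P}(C_n)$, $\delta$ denotes minimum degree, and $\phi$ is Euler's totient function. *)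

theory Defs
  imports "HOL-Number_Theory.Number_Theory"
begin

text \<open>Power graph of the cyclic group C_n, identified with Z_n = {0,...,n-1} under
  addition mod n. The integral powers of a are the multiples k*a mod n.\<close>

definition cyc_power :: "nat \<Rightarrow> nat \<Rightarrow> nat \<Rightarrow> bool" where
  "cyc_power n a b \<longleftrightarrow> (\<exists>k::int. int b = (k * int a) mod int n)"

definition pg_adj :: "nat \<Rightarrow> nat \<Rightarrow> nat \<Rightarrow> bool" where
  "pg_adj n a b \<longleftrightarrow> a \<in> {0..<n} \<and> b \<in> {0..<n} \<and> a \<noteq> b \<and>
     (cyc_power n a b \<or> cyc_power n b a)"

definition pg_deg :: "nat \<Rightarrow> nat \<Rightarrow> nat" where
  "pg_deg n a = card {b \<in> {0..<n}. pg_adj n a b}"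

definition pg_min_deg :: "nat \<Rightarrow> nat" where
  "pg_min_deg n = Min (pg_deg n ` {0..<n})"

end

theory Submission
  imports Defs
begin


definition Bc :: "nat \<Rightarrow> nat \<Rightarrow> nat" where
  "Bc k e = card {y\<in>{..<k}. gcd y k dvd e}"
definition Dc :: "nat \<Rightarrow> nat \<Rightarrow> nat" where
  "Dc k e = card {y\<in>{..<k}. e dvd y \<or> gcd y k dvd e}"

lemma periodic_shift:
  fixes P :: "nat \<Rightarrow> bool"
  assumes "\<And>y. P (y + m) = P y"
  shows "P (c * m + z) = P z"
proof (induction c)
  case (Suc c)
  have "Suc c * m + z = (c * m + z) + m" by simp
  have "P (Suc c * m + z) = P (c*m+z)" using assms[of "c*m+z"] by (simp add: algebra_simps)
  then show ?case using Suc by simp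
qed simp

lemma card_periodic:
  fixes P :: "nat \<Rightarrow> bool"
  assumes "\<And>y. P (y + m) = P y"
  shows "card {y\<in>{..<c*m}. P y} = c * card {y\<in>{..<m}. P y}"
proof (induction c)
  case 0 then show ?case by simp
next
  case (Suc c)
  have eq: "{y\<in>{..<Suc c*m}. P y} = {y\<in>{..<c*m}. P y} \<union> (\<lambda>z. c*m+z) ` {z\<in>{..<m}. P z}"
  proof (intro equalityI subsetI)
    fix y assume "y \<in> {y\<in>{..<Suc c*m}. P y}"
    then have y: "y < c*m + m" "P y" by auto
    show "y \<in> {y\<in>{..<c*m}. P y} \<union> (\<lambda>z. c*m+z) ` {z\<in>{..<m}. P z}"
    proof (cases "y < c*m")
      case True then show ?thesis using y by auto
    next
      case False
      then obtain z where z: "y = c*m + z" "z < m" using y(1)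
        by (metis add_less_cancel_left le_iff_add not_less)
      then have "P z" using y(2) periodic_shift[of P m c z, OF assms] by simp
      then show ?thesis using z by auto
    qed
  next
    fix y assume "y \<in> {y\<in>{..<c*m}. P y} \<union> (\<lambda>z. c*m+z) ` {z\<in>{..<m}. P z}"
    then show "y \<in> {y\<in>{..<Suc c*m}. P y}"
      using periodic_shift[of P m c, OF assms] by auto
  qed
  have disj: "{y\<in>{..<c*m}. P y} \<inter> (\<lambda>z. c*m+z) ` {z\<in>{..<m}. P z} = {}" by auto
  have "card {y\<in>{..<Suc c*m}. P y} = card {y\<in>{..<c*m}. P y} + card ((\<lambda>z. c*m+z) ` {z\<in>{..<m}. P z})"
    unfolding eq by (rule card_Un_disjoint) (use disj in auto)
  also have "card ((\<lambda>z. c*m+z) ` {z\<in>{..<m}. P z}) = card {z\<in>{..<m}. P z}"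
    by (rule card_image) (auto simp: inj_on_def)
  finally show ?case using Suc by simp
qed

lemma card_shift0:
  fixes P :: "nat \<Rightarrow> bool"
  assumes "P 0 = P m"
  shows "card {y\<in>{..<m}. P y} = card {y\<in>{0<..m}. P y}"
proof -
  let ?f = "\<lambda>y. if y = 0 then m else y"
  have "bij_betw ?f {y\<in>{..<m}. P y} {y\<in>{0<..m}. P y}"
    unfolding bij_betw_def
  proof
    show "inj_on ?f {y\<in>{..<m}. P y}" by (auto simp: inj_on_def)
    show "?f ` {y\<in>{..<m}. P y} = {y\<in>{0<..m}. P y}"
    proof (intro equalityI subsetI)
      fix x assume "x \<in> ?f ` {y\<in>{..<m}. P y}"
      then show "x \<in> {y\<in>{0<..m}. P y}" using assms by (auto split: if_splits)
    next
      fix x assume x: "x \<in> {y\<in>{0<..m}. P y}"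
      show "x \<in> ?f ` {y\<in>{..<m}. P y}"
      proof (cases "x = m")
        case True then show ?thesis using x assms by (auto intro!: image_eqI[of _ _ 0])
      next
        case False then show ?thesis using x by (auto intro!: image_eqI[of _ _ x])
      qed
    qed
  qed
  then show ?thesis by (rule bij_betw_same_card)
qed

lemma card_multiples:
  assumes "0 < k" "c dvd k"
  shows "card {y\<in>{..<k}. c dvd y} = k div c"
proof -
  have c0: "c > 0" using assms by (auto intro: Nat.gr0I)
  have k: "k = (k div c) * c" using assms by simp
  have "card {y\<in>{..<(k div c) * c}. c dvd y} = (k div c) * card {y\<in>{..<c}. c dvd y}"
    by (rule card_periodic) simp
  moreover have "{y\<in>{..<c}. c dvd y} = {0}"
  proof (intro equalityI subsetI)
    fix y assume "y \<in> {y\<in>{..<c}. c dvd y}"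
    then show "y \<in> {0}" by (metis (mono_tags) gr0I lessThan_iff mem_Collect_eq nat_dvd_not_less singletonI)
  qed (use c0 in auto)
  ultimately show ?thesis using k by simp
qed

lemma card_coprime_one: "0 < m \<Longrightarrow> card {y\<in>{..<m}. coprime y m} = totient m"
proof -
  assume m: "0 < m"
  have "card {y\<in>{..<m}. coprime y m} = card {y\<in>{0<..m}. coprime y m}"
  proof (rule card_shift0)
    show "coprime 0 m = coprime m m" by simp
  qed
  also have "\<dots> = totient m" by (simp add: totient_def totatives_def)
  finally show ?thesis .
qed

lemma card_coprime:
  assumes "0 < k" "m dvd k"
  shows "card {y\<in>{..<k}. coprime y m} = (k div m) * totient m"
proof -
  have m0: "m > 0" using assms by (auto intro: Nat.gr0I)
  have k: "k = (k div m) * m" using assms by simp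
  have "card {y\<in>{..<(k div m) * m}. coprime y m} = (k div m) * card {y\<in>{..<m}. coprime y m}"
    by (rule card_periodic) (simp only: coprime_iff_gcd_eq_1 gcd_add1)
  then show ?thesis using k card_coprime_one[OF m0] by simp
qed

lemma card_gcd_eq:
  assumes "0 < k" "e dvd k"
  shows "card {y\<in>{..<k}. gcd y k = e} = totient (k div e)"
proof -
  have "card {y\<in>{..<k}. gcd y k = e} = card {y\<in>{0<..k}. gcd y k = e}"
    by (rule card_shift0) simp
  also have "\<dots> = totient (k div e)" using assms by (rule card_gcd_eq_totient)
  finally show ?thesis .
qed

lemma Dc_formula:
  assumes "0 < k" "e dvd k"
  shows "Dc k e + totient (k div e) = k div e + Bc k e"
proof -
  let ?A = "{y\<in>{..<k}. e dvd y}" and ?B = "{y\<in>{..<k}. gcd y k dvd e}"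
  have un: "{y\<in>{..<k}. e dvd y \<or> gcd y k dvd e} = ?A \<union> ?B" by auto
  have int: "?A \<inter> ?B = {y\<in>{..<k}. gcd y k = e}"
    using assms by (auto intro: dvd_antisym)
  have "card (?A \<union> ?B) + card (?A \<inter> ?B) = card ?A + card ?B"
    using card_Un_Int[of ?A ?B] by simp
  then show ?thesis
    unfolding Dc_def Bc_def un using int card_gcd_eq[OF assms] card_multiples[OF assms] by simp
qed

lemma Dc_le: "Dc k e \<le> k"
  unfolding Dc_def by (rule order.trans[OF card_mono[of "{..<k}"]]) auto

lemma Dc_one: "Dc k 1 = k"
  unfolding Dc_def by simp



lemma gcd_mult_coprime_nat:
  fixes y Q R :: nat
  assumes "coprime Q R"
  shows "gcd y (Q*R) = gcd y Q * gcd y R"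
proof (rule dvd_antisym)
  let ?d1 = "gcd y Q" and ?d2 = "gcd y R" and ?g = "gcd y (Q*R)"
  have c12: "coprime ?d1 ?d2"
    using assms by (meson coprime_divisors gcd_dvd2)
  have a1: "?d1 dvd ?g" by (intro gcd_greatest) (simp_all add: dvd_mult2)
  have a2: "?d2 dvd ?g" by (intro gcd_greatest) (simp_all add: dvd_mult)
  show "?d1 * ?d2 dvd ?g"
    by (rule divides_mult[OF a1 a2 c12])
  obtain Q' where Q: "Q = ?d1 * Q'" by (metis dvdE gcd_dvd2)
  obtain R' where R: "R = ?d2 * R'" by (metis dvdE gcd_dvd2)
  have cQR: "coprime R' Q'"
  proof -
    have "coprime R Q" using assms by (simp add: coprime_commute)
    moreover have "R' dvd R" "Q' dvd Q" using Q R by (metis dvd_triv_right)+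
    ultimately show ?thesis by (meson coprime_divisors)
  qed
  have g1: "?g dvd R * ?d1"
  proof -
    have "?g dvd R*y" by (simp add: dvd_mult)
    moreover have "?g dvd R*Q" by (simp add: mult.commute)
    ultimately have "?g dvd gcd (R*y) (R*Q)" by (rule gcd_greatest)
    then show ?thesis by (simp add: gcd_mult_distrib_nat[symmetric])
  qed
  have g2: "?g dvd Q * ?d2"
  proof -
    have "?g dvd Q*y" by (simp add: dvd_mult)
    moreover have "?g dvd Q*R" by simp
    ultimately have "?g dvd gcd (Q*y) (Q*R)" by (rule gcd_greatest)
    then show ?thesis by (simp add: gcd_mult_distrib_nat[symmetric])
  qed
  have "?g dvd gcd (R * ?d1) (Q * ?d2)" using g1 g2 by (rule gcd_greatest)
  also have e1: "R * ?d1 = (?d1 * ?d2) * R'" using R by simp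
  also have e2: "Q * ?d2 = (?d1 * ?d2) * Q'" using Q by simp
  also have "gcd ((?d1 * ?d2) * R') ((?d1 * ?d2) * Q') = ?d1 * ?d2 * gcd R' Q'"
    by (rule gcd_mult_distrib_nat[symmetric])
  also have "\<dots> = ?d1 * ?d2" using cQR by simp
  finally show "?g dvd ?d1 * ?d2" .
qed

lemma crt_bij:
  fixes m1 m2 :: nat
  assumes "coprime m1 m2" "0 < m1" "0 < m2"
  shows "bij_betw (\<lambda>x. (x mod m1, x mod m2)) {..<m1*m2} ({..<m1} \<times> {..<m2})"
  unfolding bij_betw_def
proof
  show "inj_on (\<lambda>x. (x mod m1, x mod m2)) {..<m1*m2}"
  proof (intro inj_onI)
    fix x y assume xy: "x \<in> {..<m1*m2}" "y \<in> {..<m1*m2}"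
      "(x mod m1, x mod m2) = (y mod m1, y mod m2)"
    have "[x = y] (mod m1*m2)"
      by (rule coprime_cong_mult_nat) (use xy assms in \<open>auto simp: cong_def\<close>)
    then show "x = y" using xy by (auto intro: cong_less_modulus_unique_nat)
  qed
next
  show "(\<lambda>x. (x mod m1, x mod m2)) ` {..<m1*m2} = {..<m1} \<times> {..<m2}"
  proof (intro equalityI subsetI)
    fix z assume "z \<in> (\<lambda>x. (x mod m1, x mod m2)) ` {..<m1*m2}"
    then show "z \<in> {..<m1} \<times> {..<m2}" using assms by auto
  next
    fix z assume z: "z \<in> {..<m1} \<times> {..<m2}"
    obtain a b where ab: "z = (a, b)" "a < m1" "b < m2" using z by auto
    obtain x where x: "x < m1 * m2" "[x = a] (mod m1)" "[x = b] (mod m2)"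
      using binary_chinese_remainder_unique_nat[OF assms(1), of a b] assms by auto
    have "x mod m1 = a" "x mod m2 = b" using x ab by (auto simp: cong_def)
    then show "z \<in> (\<lambda>x. (x mod m1, x mod m2)) ` {..<m1*m2}" using x ab by force
  qed
qed

lemma crt_card:
  fixes m1 m2 :: nat
  assumes "coprime m1 m2" "0 < m1" "0 < m2"
  shows "card {x\<in>{..<m1*m2}. A (x mod m1) \<and> B (x mod m2)} =
           card {u\<in>{..<m1}. A u} * card {v\<in>{..<m2}. B v}"
proof -
  let ?f = "\<lambda>x. (x mod m1, x mod m2)"
  have bij: "bij_betw ?f {..<m1*m2} ({..<m1} \<times> {..<m2})" by (rule crt_bij[OF assms])
  have sub: "{x\<in>{..<m1*m2}. A (x mod m1) \<and> B (x mod m2)} \<subseteq> {..<m1*m2}" by auto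
  have bij2: "bij_betw ?f {x\<in>{..<m1*m2}. A (x mod m1) \<and> B (x mod m2)}
                (?f ` {x\<in>{..<m1*m2}. A (x mod m1) \<and> B (x mod m2)})"
    by (rule bij_betw_subset[OF bij sub]) simp
  have img: "?f ` {x\<in>{..<m1*m2}. A (x mod m1) \<and> B (x mod m2)} =
               {u\<in>{..<m1}. A u} \<times> {v\<in>{..<m2}. B v}"
  proof (intro equalityI subsetI)
    fix z assume "z \<in> ?f ` {x\<in>{..<m1*m2}. A (x mod m1) \<and> B (x mod m2)}"
    then show "z \<in> {u\<in>{..<m1}. A u} \<times> {v\<in>{..<m2}. B v}" using assms by auto
  next
    fix z assume z: "z \<in> {u\<in>{..<m1}. A u} \<times> {v\<in>{..<m2}. B v}"
    then have "z \<in> ?f ` {..<m1*m2}" using bij unfolding bij_betw_def by auto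
    then obtain x where x: "x < m1*m2" "z = ?f x" by auto
    then show "z \<in> ?f ` {x\<in>{..<m1*m2}. A (x mod m1) \<and> B (x mod m2)}" using z by auto
  qed
  show ?thesis
    using bij_betw_same_card[OF bij2] unfolding img by (simp add: card_cartesian_product)
qed

lemma Bc_mult:
  fixes Q R e1 e2 :: nat
  assumes "coprime Q R" "0 < Q" "0 < R" "e1 dvd Q" "e2 dvd R"
  shows "Bc (Q*R) (e1*e2) = Bc Q e1 * Bc R e2"
proof -
  have key: "gcd y (Q*R) dvd e1*e2 \<longleftrightarrow> gcd (y mod Q) Q dvd e1 \<and> gcd (y mod R) R dvd e2" for y
  proof -
    have m: "gcd (y mod Q) Q = gcd y Q" "gcd (y mod R) R = gcd y R"
      using assms by (simp_all add: gcd_mod_left)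
    have g: "gcd y (Q*R) = gcd y Q * gcd y R" by (rule gcd_mult_coprime_nat[OF assms(1)])
    have c1: "coprime (gcd y Q) e2" using assms(1,5) by (meson coprime_divisors gcd_dvd2)
    have c2: "coprime (gcd y R) e1" using assms(1,4) by (meson coprime_divisors coprime_commute gcd_dvd2)
    show ?thesis
    proof
      assume "gcd y (Q*R) dvd e1*e2"
      then have d: "gcd y Q * gcd y R dvd e1 * e2" using g by simp
      have "gcd y Q dvd e1 * e2" using d by (meson dvd_mult_left)
      then have "gcd y Q dvd e1" using c1 by (simp add: coprime_dvd_mult_left_iff)
      moreover have "gcd y R dvd e1 * e2" using d by (meson dvd_mult_right)
      then have "gcd y R dvd e2" using c2 by (simp add: coprime_dvd_mult_right_iff)
      ultimately show "gcd (y mod Q) Q dvd e1 \<and> gcd (y mod R) R dvd e2" using m by simp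
    next
      assume "gcd (y mod Q) Q dvd e1 \<and> gcd (y mod R) R dvd e2"
      then show "gcd y (Q*R) dvd e1*e2" using m g by (simp add: mult_dvd_mono)
    qed
  qed
  have "Bc (Q*R) (e1*e2) = card {x\<in>{..<Q*R}. gcd (x mod Q) Q dvd e1 \<and> gcd (x mod R) R dvd e2}"
    unfolding Bc_def using key by simp
  also have "\<dots> = card {u\<in>{..<Q}. gcd u Q dvd e1} * card {v\<in>{..<R}. gcd v R dvd e2}"
    by (rule crt_card[OF assms(1-3)])
  finally show ?thesis unfolding Bc_def .
qed

lemma Bc_self: "Bc k k = k"
  unfolding Bc_def by simp

lemma Bc_one: "0 < k \<Longrightarrow> Bc k 1 = totient k"
proof -
  assume k: "0 < k"
  have "(gcd y k dvd 1) = coprime y k" for y :: nat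
    by (simp only: nat_dvd_1_iff_1 coprime_iff_gcd_eq_1)
  then show ?thesis unfolding Bc_def using card_coprime_one[OF k] by simp
qed

lemma Bc_lower:
  assumes "0 < k" "e dvd k"
  shows "e * totient (k div e) \<le> Bc k e"
proof -
  obtain m where k: "k = m * e" using assms(2) by (metis dvdE mult.commute)
  have e0: "e > 0" and m0: "m > 0" using assms k by auto
  have km: "k div e = m" using k e0 by simp
  have "{y\<in>{..<k}. coprime y m} \<subseteq> {y\<in>{..<k}. gcd y k dvd e}"
  proof
    fix y assume "y \<in> {y\<in>{..<k}. coprime y m}"
    then have "coprime y m" "y < k" by auto
    then have "gcd y k = gcd y e" unfolding k by (simp add: gcd_mult_right_left_cancel)
    then show "y \<in> {y\<in>{..<k}. gcd y k dvd e}" using \<open>y < k\<close> by simp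
  qed
  then have "card {y\<in>{..<k}. coprime y m} \<le> Bc k e"
    unfolding Bc_def by (intro card_mono) auto
  moreover have "card {y\<in>{..<k}. coprime y m} = e * totient m"
    using card_coprime[of k m] assms k m0 by simp
  ultimately show ?thesis using km by simp
qed

lemma gcd_primepow_dvd_iff:
  fixes q :: nat
  assumes "prime q" "g < a"
  shows "gcd y (q^a) dvd q^g \<longleftrightarrow> \<not> q^Suc g dvd y"
proof -
  obtain i where i: "i \<le> a" "gcd y (q^a) = q^i"
    using divides_primepow_nat[OF assms(1), of "gcd y (q^a)" a] by auto
  have q1: "q > 1" using assms prime_gt_1_nat by blast
  have q2: "2 \<le> q" using q1 by simp
  have "gcd y (q^a) dvd q^g \<longleftrightarrow> i \<le> g" using i q2 by (simp add: dvd_power_iff_le)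
  moreover have "q^Suc g dvd y \<longleftrightarrow> q^Suc g dvd gcd y (q^a)"
  proof -
    have pd: "q^Suc g dvd q^a" using assms by (intro le_imp_power_dvd) simp
    then show ?thesis using gcd_greatest_iff by blast
  qed
  moreover have "q^Suc g dvd gcd y (q^a) \<longleftrightarrow> Suc g \<le> i"
    using i(2) dvd_power_iff_le[OF q2, of "Suc g" i] by (simp only:)
  ultimately show ?thesis by auto
qed

lemma Bc_primepow:
  fixes q :: nat
  assumes "prime q" "g < a"
  shows "Bc (q^a) (q^g) + q^(a - Suc g) = q^a"
proof -
  have q0: "q > 0" using assms prime_gt_0_nat by blast
  have set: "{y\<in>{..<q^a}. gcd y (q^a) dvd q^g} = {..<q^a} - {y\<in>{..<q^a}. q^Suc g dvd y}"
    using gcd_primepow_dvd_iff[OF assms] by auto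
  have cm: "card {y\<in>{..<q^a}. q^Suc g dvd y} = q^a div q^Suc g"
  proof (rule card_multiples)
    show "0 < q^a" using q0 by simp
    show "q^Suc g dvd q^a" using assms by (intro le_imp_power_dvd) simp
  qed
  have dv: "q^a div q^Suc g = q^(a - Suc g)"
    using q0 assms by (simp add: power_diff)
  let ?S = "{y\<in>{..<q^a}. q^Suc g dvd y}"
  have "card ({..<q^a} - ?S) = card {..<q^a} - card ?S"
    by (rule card_Diff_subset) auto
  then have "Bc (q^a) (q^g) = q^a - q^(a - Suc g)"
    unfolding Bc_def set cm dv by simp
  moreover have "q^(a - Suc g) \<le> q^a" using q0 by (simp add: power_increasing)
  ultimately show ?thesis by simp
qed



lemma cyc_power_iff:
  assumes "0 < n" "b < n"
  shows "cyc_power n a b \<longleftrightarrow> gcd a n dvd b"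
proof
  assume "cyc_power n a b"
  then obtain k :: int where k: "int b = (k * int a) mod int n" unfolding cyc_power_def by blast
  have e: "int b = k * int a - int n * ((k * int a) div int n)"
    using k by (simp add: minus_div_mult_eq_mod[symmetric] mult.commute)
  have "gcd (int a) (int n) dvd k * int a - int n * ((k * int a) div int n)"
    by (intro dvd_diff dvd_mult dvd_mult2) simp_all
  then have "int (gcd a n) dvd int b" using e by (simp add: gcd_int_int_eq)
  then show "gcd a n dvd b" by simp
next
  assume "gcd a n dvd b"
  then obtain c where c: "b = gcd a n * c" by (rule dvdE)
  obtain u v :: int where uv: "u * int a + v * int n = gcd (int a) (int n)"
    using bezout_int by blast
  have g: "gcd (int a) (int n) = int (gcd a n)" by (simp add: gcd_int_int_eq)
  have "(int c * u * int a) mod int n = (int c * (u * int a + v * int n)) mod int n"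
  proof -
    have "int c * (u * int a + v * int n) = int c * u * int a + (int c * v) * int n"
      by (simp add: algebra_simps)
    then show ?thesis by simp
  qed
  also have "\<dots> = int b mod int n" using uv g c by (simp add: mult.commute)
  also have "\<dots> = int b" using assms by simp
  finally show "cyc_power n a b" unfolding cyc_power_def by (metis)
qed

lemma pg_deg_Dc:
  assumes "0 < n" "a < n"
  shows "pg_deg n a + 1 = Dc n (gcd a n)"
proof -
  have iff: "pg_adj n a b \<longleftrightarrow> b \<in> {y\<in>{..<n}. gcd a n dvd y \<or> gcd y n dvd gcd a n} - {a}" for b
  proof (cases "b < n")
    case True
    have "gcd b n dvd a \<longleftrightarrow> gcd b n dvd gcd a n" by (simp add: gcd_greatest_iff)
    then show ?thesis unfolding pg_adj_def using True assms cyc_power_iff[OF assms(1) True, of a]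
      cyc_power_iff[OF assms(1,2), of b] by auto
  next
    case False
    then show ?thesis unfolding pg_adj_def by auto
  qed
  have set: "{b\<in>{0..<n}. pg_adj n a b} = {y\<in>{..<n}. gcd a n dvd y \<or> gcd y n dvd gcd a n} - {a}"
    using iff by auto
  have ain: "a \<in> {y\<in>{..<n}. gcd a n dvd y \<or> gcd y n dvd gcd a n}" using assms by simp
  have "card ({y\<in>{..<n}. gcd a n dvd y \<or> gcd y n dvd gcd a n} - {a}) + 1 =
        card {y\<in>{..<n}. gcd a n dvd y \<or> gcd y n dvd gcd a n}"
    using ain by (subst card_Diff_singleton) (auto intro!: Suc_pred card_gt_0_iff[THEN iffD2])
  then show ?thesis unfolding pg_deg_def Dc_def set .
qed



lemma prod_le_subset_01:
  fixes f :: "'a \<Rightarrow> real"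
  assumes "finite B" "A \<subseteq> B" "\<And>x. x \<in> B \<Longrightarrow> 0 \<le> f x \<and> f x \<le> 1"
  shows "prod f B \<le> prod f A"
proof -
  have "prod f B = prod f A * prod f (B - A)"
    using assms by (metis prod.subset_diff mult.commute)
  moreover have "prod f (B - A) \<le> 1" using assms by (intro prod_le_1) auto
  moreover have "0 \<le> prod f A" using assms by (intro prod_nonneg) auto
  ultimately show ?thesis by (simp add: mult_left_le)
qed

locale cyc =
  fixes n r :: nat and p \<alpha> :: "nat \<Rightarrow> nat"
  assumes r2: "r \<ge> 2"
    and primes: "\<forall>i\<in>{1..r}. prime (p i)"
    and incr: "\<forall>i\<in>{1..<r}. p i < p (i + 1)"
    and pos: "\<forall>i\<in>{1..r}. \<alpha> i \<ge> 1"
    and n_def: "n = (\<Prod>i=1..r. p i ^ \<alpha> i)"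
begin

definition PP :: "nat \<Rightarrow> nat" where "PP i = p i ^ \<alpha> i"
definition PI :: "nat set \<Rightarrow> nat" where "PI I = (\<Prod>i\<in>I. PP i)"

lemma n_PI: "n = PI {1..r}" unfolding n_def PI_def PP_def by simp

lemma prime_p: "i \<in> {1..r} \<Longrightarrow> prime (p i)" using primes by auto

lemma p_gt1: "i \<in> {1..r} \<Longrightarrow> p i > 1" using prime_p prime_gt_1_nat by blast

lemma mono_p: "i \<in> {1..r} \<Longrightarrow> j \<in> {1..r} \<Longrightarrow> i < j \<Longrightarrow> p i < p j"
proof (induction j)
  case 0 then show ?case by simp
next
  case (Suc j)
  show ?case
  proof (cases "i = j")
    case True then show ?thesis using incr Suc.prems by auto
  next
    case False
    then have "i < j" using Suc.prems by simp
    then have "p i < p j" using Suc by auto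
    moreover have "p j < p (Suc j)" using incr Suc.prems \<open>i < j\<close> by auto
    ultimately show ?thesis by simp
  qed
qed

lemma mono_p_iff: "i \<in> {1..r} \<Longrightarrow> j \<in> {1..r} \<Longrightarrow> p i < p j \<longleftrightarrow> i < j"
  using mono_p by (metis less_asym linorder_neqE_nat)

lemma inj_p: "inj_on p {1..r}"
  unfolding inj_on_def using mono_p by (metis linorder_neqE_nat less_irrefl)

lemma p_ge: "i \<in> {1..r} \<Longrightarrow> p i \<ge> i + 1"
proof (induction i)
  case 0 then show ?case by simp
next
  case (Suc i)
  show ?case
  proof (cases "i = 0")
    case True then show ?thesis using p_gt1[OF Suc.prems] by simp
  next
    case False
    then have "i \<in> {1..r}" using Suc.prems by auto
    then have "p i \<ge> i + 1" using Suc.IH by simp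
    moreover have "p i < p (Suc i)" using incr Suc.prems False by auto
    ultimately show ?thesis by simp
  qed
qed

lemma PP_pos: "i \<in> {1..r} \<Longrightarrow> PP i > 0"
proof -
  assume "i \<in> {1..r}"
  then have "p i > 1" by (rule p_gt1)
  then show ?thesis unfolding PP_def by simp
qed

lemma PI_pos: "I \<subseteq> {1..r} \<Longrightarrow> PI I > 0"
  unfolding PI_def using PP_pos by (intro prod_pos) auto

lemma n_pos: "n > 0" using PI_pos[of "{1..r}"] n_PI by simp

lemma PI_union: "finite A \<Longrightarrow> finite B \<Longrightarrow> A \<inter> B = {} \<Longrightarrow> PI (A \<union> B) = PI A * PI B"
  unfolding PI_def by (rule prod.union_disjoint)

lemma PI_insert: "finite A \<Longrightarrow> k \<notin> A \<Longrightarrow> PI (insert k A) = PP k * PI A"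
  unfolding PI_def by simp

lemma coprime_PP_PI:
  assumes "k \<in> {1..r}" "I \<subseteq> {1..r}" "k \<notin> I"
  shows "coprime (PP k) (PI I)"
  unfolding PI_def
proof (rule prod_coprime_right)
  fix i assume i: "i \<in> I"
  then have "p k \<noteq> p i" using inj_p assms unfolding inj_on_def by blast
  then have "coprime (p k) (p i)" using prime_p assms i by (intro primes_coprime) auto
  then show "coprime (PP k) (PP i)" unfolding PP_def by simp
qed

lemma pf_PP: "i \<in> {1..r} \<Longrightarrow> prime_factors (PP i) = {p i}"
proof -
  assume i: "i \<in> {1..r}"
  then have "\<alpha> i \<ge> 1" using pos by blast
  then have a: "\<alpha> i > 0" by simp
  have "prime (p i)" using i by (rule prime_p)
  then show ?thesis unfolding PP_def using a by (simp add: prime_factors_power prime_prime_factors)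
qed

lemma pf_PI: "I \<subseteq> {1..r} \<Longrightarrow> prime_factors (PI I) = p ` I"
proof -
  assume I: "I \<subseteq> {1..r}"
  have fin: "finite I" using I finite_subset by blast
  have "prime_factors (PI I) = \<Union>((prime_factors \<circ> PP) ` I)"
    unfolding PI_def using PP_pos I by (intro prime_factors_prod fin) force
  also have "\<Union>((prime_factors \<circ> PP) ` I) = \<Union>((\<lambda>i. {p i}) ` I)"
    using pf_PP I by (intro arg_cong[where f=Union] image_cong) auto
  also have "\<dots> = p ` I" by auto
  finally show ?thesis .
qed

lemma pf_n: "prime_factors n = p ` {1..r}" using pf_PI[of "{1..r}"] n_PI by simp

lemma pf_dvd_n: "m dvd n \<Longrightarrow> prime_factors m \<subseteq> p ` {1..r}"
  using pf_n n_pos by (metis dvd_prime_factors neq0_conv)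

lemma prime_dvd_n: "prime q \<Longrightarrow> q dvd n \<Longrightarrow> \<exists>k\<in>{1..r}. q = p k"
  using pf_n n_pos by (metis image_iff in_prime_factors_iff neq0_conv)

lemma totient_ratio_ge:
  assumes "m > 0" "prime_factors m \<subseteq> p ` I" "I \<subseteq> {1..r}"
  shows "real (totient m) \<ge> real m * (\<Prod>i\<in>I. 1 - 1 / real (p i))"
proof -
  have fin: "finite I" using assms finite_subset by blast
  have "(\<Prod>i\<in>I. 1 - 1 / real (p i)) = (\<Prod>q\<in>p ` I. 1 - 1 / real q)"
    using inj_p assms by (subst prod.reindex) (auto intro: inj_on_subset)
  also have "\<dots> \<le> (\<Prod>q\<in>prime_factors m. 1 - 1 / real q)"
  proof (rule prod_le_subset_01)
    show "finite (p ` I)" using fin by simp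
    show "prime_factors m \<subseteq> p ` I" by (rule assms(2))
    fix x assume "x \<in> p ` I"
    then have "x > 1" using p_gt1 assms by auto
    then show "0 \<le> 1 - 1 / real x \<and> 1 - 1 / real x \<le> 1" by (simp add: field_simps)
  qed
  finally have "(\<Prod>i\<in>I. 1 - 1 / real (p i)) \<le> (\<Prod>q\<in>prime_factors m. 1 - 1 / real q)" .
  then show ?thesis using totient_formula2[of m] by (simp add: mult_left_mono)
qed

lemma prod_range_ge:
  assumes "1 \<le> a" "b \<le> r"
  shows "(\<Prod>i\<in>{a..b}. 1 - 1 / real (p i)) \<ge> real a / real (b + 1) \<or> b < a"
  using assms
proof (induction b)
  case 0 then show ?case by simp
next
  case (Suc b)
  show ?case
  proof (cases "Suc b < a")
    case True then show ?thesis by simp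
  next
    case False
    then have ab: "a \<le> Suc b" by simp
    have pge: "real (p (Suc b)) \<ge> real (Suc b + 1)" using p_ge[of "Suc b"] Suc.prems by simp
    have f: "1 - 1 / real (p (Suc b)) \<ge> real (Suc b) / real (Suc b + 1)"
    proof -
      have "1 / real (p (Suc b)) \<le> 1 / real (Suc b + 1)"
        using pge by (intro divide_left_mono) auto
      then show ?thesis by (simp add: field_simps)
    qed
    show ?thesis
    proof (cases "a = Suc b")
      case True
      then have "{a..Suc b} = {Suc b}" by auto
      then show ?thesis using f True by simp
    next
      case False
      then have ab': "a \<le> b" using ab by simp
      have IH: "(\<Prod>i\<in>{a..b}. 1 - 1 / real (p i)) \<ge> real a / real (b + 1)"
        using Suc ab' by auto
      have "{a..Suc b} = insert (Suc b) {a..b}" using ab by auto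
      have f0: "0 \<le> 1 - 1 / real (p (Suc b))" using p_gt1[of "Suc b"] Suc.prems by simp
      have "(\<Prod>i\<in>{a..Suc b}. 1 - 1 / real (p i)) =
                 (1 - 1 / real (p (Suc b))) * (\<Prod>i\<in>{a..b}. 1 - 1 / real (p i))"
        using \<open>{a..Suc b} = insert (Suc b) {a..b}\<close> by simp
      also have "\<dots> \<ge> (real (Suc b) / real (Suc b + 1)) * (real a / real (b + 1))"
        using IH f f0 by (intro mult_mono) auto
      also have "(real (Suc b) / real (Suc b + 1)) * (real a / real (b + 1)) = real a / real (Suc b + 1)"
        by (simp add: field_simps del: of_nat_Suc)
      finally show ?thesis by simp
    qed
  qed
qed

lemma prod_all_ge: "(\<Prod>i\<in>{1..r}. 1 - 1 / real (p i)) \<ge> 1 / real (r + 1)"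
  using prod_range_ge[of 1 r] r2 by simp

lemma prod_2_ge: "(\<Prod>i\<in>{2..r}. 1 - 1 / real (p i)) \<ge> 2 / real (r + 1)"
  using prod_range_ge[of 2 r] r2 by simp

lemma telescope:
  assumes "1 \<le> k" "k \<le> r"
  shows "(\<Prod>i\<in>{2..k}. 1 - 1 / real (p i)) \<ge> real (p 1) / real (p k)"
  using assms
proof (induction k)
  case 0 then show ?case by simp
next
  case (Suc k)
  show ?case
  proof (cases "k = 0")
    case True then show ?thesis by simp
  next
    case False
    have IH: "(\<Prod>i\<in>{2..k}. 1 - 1 / real (p i)) \<ge> real (p 1) / real (p k)" using Suc False by simp
    have lt: "p k < p (Suc k)" using incr Suc.prems False by auto
    have pk0: "p k > 0" using p_gt1[of k] Suc.prems False by simp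
    have f: "1 - 1 / real (p (Suc k)) \<ge> real (p k) / real (p (Suc k))"
    proof -
      have "real (p k) \<le> real (p (Suc k)) - 1" using lt by linarith
      then show ?thesis using pk0 by (simp add: field_simps)
    qed
    have "{2..Suc k} = insert (Suc k) {2..k}" using False by auto
    have f0: "0 \<le> 1 - 1 / real (p (Suc k))" using p_gt1[of "Suc k"] Suc.prems by simp
    have "(\<Prod>i\<in>{2..Suc k}. 1 - 1 / real (p i)) =
               (1 - 1 / real (p (Suc k))) * (\<Prod>i\<in>{2..k}. 1 - 1 / real (p i))"
      using \<open>{2..Suc k} = insert (Suc k) {2..k}\<close> by simp
    also have "\<dots> \<ge> (real (p k) / real (p (Suc k))) * (real (p 1) / real (p k))"
      using IH f f0 by (intro mult_mono) (auto simp: pk0)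
    also have "(real (p k) / real (p (Suc k))) * (real (p 1) / real (p k)) = real (p 1) / real (p (Suc k))"
      using pk0 by (simp add: field_simps)
    finally show ?thesis by simp
  qed
qed

lemma chain_ii:
  assumes ii: "\<forall>i\<in>{1..<r}. totient (p (i + 1)) \<ge> r * totient (p i)"
    and "k \<in> {1..r}" "j \<in> {1..r}" "k < j"
  shows "p j - 1 \<ge> r * (p k - 1)"
  using assms(3,4)
proof (induction j)
  case 0 then show ?case by simp
next
  case (Suc j)
  have t: "totient (p (Suc j)) = p (Suc j) - 1" using prime_p Suc.prems by (simp add: totient_prime)
  show ?case
  proof (cases "k = j")
    case True
    have "totient (p k) = p k - 1" using prime_p assms by (simp add: totient_prime)
    have jr: "j \<in> {1..<r}" using Suc.prems True assms by auto
    then have "totient (p (j+1)) \<ge> r * totient (p j)" using ii by blast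
    then show ?thesis using True t \<open>totient (p k) = p k - 1\<close> by simp
  next
    case False
    then have kj: "k < j" using Suc.prems by simp
    then have "p j - 1 \<ge> r * (p k - 1)" using Suc by auto
    moreover have "totient (p j) = p j - 1" using prime_p Suc.prems kj assms by (simp add: totient_prime)
    moreover have "totient (p (Suc j)) \<ge> r * totient (p j)" using ii Suc.prems kj assms by auto
    moreover have "r * (p j - 1) \<ge> p j - 1" using r2 by simp
    ultimately have "r * (p j - 1) \<le> p (Suc j) - 1" using t by simp
    then show ?thesis using \<open>p j - 1 \<ge> r * (p k - 1)\<close> \<open>r * (p j - 1) \<ge> p j - 1\<close> by linarith
  qed
qed

lemma cond_i_prod:
  assumes "2 * totient (\<Prod>i=1..r. p i) \<ge> (\<Prod>i=1..r. p i)"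
  shows "(\<Prod>i\<in>{1..r}. 1 - 1 / real (p i)) \<ge> 1 / 2"
proof -
  define R where "R = (\<Prod>i=1..r. p i)"
  have R0: "R > 0" unfolding R_def using p_gt1 by (intro prod_pos) (auto intro: order.strict_trans[OF zero_less_one])
  have pfR: "prime_factors R = p ` {1..r}"
  proof -
    have "prime_factors R = \<Union>((prime_factors \<circ> p) ` {1..r})"
      unfolding R_def using p_gt1 by (intro prime_factors_prod) force+
    also have "\<dots> = p ` {1..r}" using prime_p by (auto simp: prime_prime_factors)
    finally show ?thesis .
  qed
  define X where "X = (\<Prod>i\<in>{1..r}. 1 - 1 / real (p i))"
  have "real (totient R) = real R * (\<Prod>q\<in>p ` {1..r}. 1 - 1 / real q)"
    using totient_formula2[of R] pfR by simp
  also have "(\<Prod>q\<in>p ` {1..r}. 1 - 1 / real q) = X"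
    unfolding X_def using inj_p by (subst prod.reindex) auto
  finally have eq: "real (totient R) = real R * X" .
  have "R \<le> 2 * totient R" using assms unfolding R_def .
  then have "real R \<le> real (2 * totient R)" by (rule of_nat_mono)
  then have "real R * 1 \<le> real R * (2 * X)" using eq by simp
  then have "1 \<le> 2 * X" using R0 by (subst (asm) mult_le_cancel_left_pos) auto
  then show ?thesis unfolding X_def by simp
qed

end


context cyc begin

definition Rk :: "nat \<Rightarrow> nat" where "Rk k = PI ({1..r} - {k})"

lemma Rk_pos: "Rk k > 0" unfolding Rk_def by (rule PI_pos) auto

lemma n_split: "k \<in> {1..r} \<Longrightarrow> n = PP k * Rk k"
proof -
  assume k: "k \<in> {1..r}"
  have "{1..r} = insert k ({1..r} - {k})" using k by auto
  then have "PI {1..r} = PP k * PI ({1..r} - {k})"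
    by (metis PI_insert finite_Diff finite_atLeastAtMost Diff_iff singletonI)
  then show ?thesis using n_PI unfolding Rk_def by simp
qed

lemma coprime_split: "k \<in> {1..r} \<Longrightarrow> coprime (PP k) (Rk k)"
  unfolding Rk_def by (rule coprime_PP_PI) auto

lemma pf_Rk: "k \<in> {1..r} \<Longrightarrow> prime_factors (Rk k) = p ` ({1..r} - {k})"
  unfolding Rk_def by (rule pf_PI) auto

lemma p_not_dvd_Rk:
  assumes k: "k \<in> {1..r}" shows "\<not> p k dvd Rk k"
proof
  assume d: "p k dvd Rk k"
  have "p k \<in> prime_factors (Rk k)" using d prime_p[OF k] Rk_pos
    by (auto simp: in_prime_factors_iff)
  then have "p k \<in> p ` ({1..r} - {k})" using pf_Rk[OF k] by simp
  then obtain i where i: "i \<in> {1..r} - {k}" "p k = p i" by blast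
  have "k = i" using inj_onD[OF inj_p i(2)] k i(1) by blast
  then show False using i(1) by blast
qed

lemma Dc_split:
  assumes k: "k \<in> {1..r}" and g: "g \<le> \<alpha> k" and e: "e' dvd Rk k"
  shows "real (Dc n (p k ^ g * e')) =
           real (p k ^ (\<alpha> k - g)) * real (Rk k div e')
         + real (Bc (PP k) (p k ^ g)) * real (Bc (Rk k) e')
         - real (totient (p k ^ (\<alpha> k - g))) * real (totient (Rk k div e'))"
proof -
  let ?q = "p k" and ?Q = "PP k" and ?R = "Rk k"
  have n: "n = ?Q * ?R" by (rule n_split[OF k])
  have cop: "coprime ?Q ?R" by (rule coprime_split[OF k])
  have q0: "?q > 0" using p_gt1[OF k] by simp
  have Q0: "?Q > 0" using PP_pos[OF k] .
  have gd: "?q ^ g dvd ?Q" unfolding PP_def using g by (rule le_imp_power_dvd)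
  have ed: "?q ^ g * e' dvd n" unfolding n using gd e by (rule mult_dvd_mono)
  have F: "Dc n (?q ^ g * e') + totient (n div (?q ^ g * e')) = n div (?q ^ g * e') + Bc n (?q ^ g * e')"
    by (rule Dc_formula[OF n_pos ed])
  have div: "n div (?q ^ g * e') = ?q ^ (\<alpha> k - g) * (?R div e')"
  proof -
    have "n div (?q ^ g * e') = (?Q div ?q ^ g) * (?R div e')"
      unfolding n using gd e by (rule div_mult_div_if_dvd[symmetric])
    moreover have "?Q div ?q ^ g = ?q ^ (\<alpha> k - g)"
      unfolding PP_def using g q0 by (simp add: power_diff)
    ultimately show ?thesis by simp
  qed
  have tot: "totient (?q ^ (\<alpha> k - g) * (?R div e')) = totient (?q ^ (\<alpha> k - g)) * totient (?R div e')"
  proof (rule totient_mult_coprime)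
    have "?q ^ (\<alpha> k - g) dvd ?Q" unfolding PP_def by (rule le_imp_power_dvd) simp
    moreover have "?R div e' dvd ?R" using e by (metis dvd_div_mult_self dvd_triv_left)
    ultimately show "coprime (?q ^ (\<alpha> k - g)) (?R div e')" using cop by (meson coprime_divisors)
  qed
  have bc: "Bc n (?q ^ g * e') = Bc ?Q (?q ^ g) * Bc ?R e'"
    unfolding n by (rule Bc_mult[OF cop Q0 Rk_pos gd e])
  have "real (Dc n (?q ^ g * e')) + real (totient (?q ^ (\<alpha> k - g))) * real (totient (?R div e'))
        = real (?q ^ (\<alpha> k - g)) * real (?R div e') + real (Bc ?Q (?q ^ g)) * real (Bc ?R e')"
    using F unfolding div tot bc by (metis of_nat_add of_nat_mult)
  then show ?thesis by linarith
qed

lemma Bc_primepow_real: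
  assumes k: "k \<in> {1..r}" and g: "g < \<alpha> k"
  shows "real (Bc (PP k) (p k ^ g)) = real (p k) ^ \<alpha> k - real (p k) ^ (\<alpha> k - Suc g)"
proof -
  have "Bc (p k ^ \<alpha> k) (p k ^ g) + p k ^ (\<alpha> k - Suc g) = p k ^ \<alpha> k"
    by (rule Bc_primepow[OF prime_p[OF k] g])
  then have "real (Bc (p k ^ \<alpha> k) (p k ^ g)) + real (p k) ^ (\<alpha> k - Suc g) = real (p k) ^ \<alpha> k"
    by (metis of_nat_add of_nat_power)
  then show ?thesis unfolding PP_def by linarith
qed

lemma totient_pp_real:
  assumes k: "k \<in> {1..r}" and x: "x \<ge> 1"
  shows "real (totient (p k ^ x)) = real (p k) ^ (x - 1) * (real (p k) - 1)"
proof -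
  have "totient (p k ^ x) = p k ^ (x - 1) * (p k - 1)"
    using prime_p[OF k] x by (simp add: totient_prime_power)
  moreover have "real (p k - 1) = real (p k) - 1" using p_gt1[OF k] by simp
  ultimately show ?thesis by simp
qed

lemma raise_step:
  assumes k: "k \<in> {1..r}" and g1: "1 \<le> g" and g: "g \<le> \<alpha> k" and e: "e' dvd Rk k"
    and K: "real (Bc (Rk k) e') + (real (p k) - 1) * real (totient (Rk k div e')) \<ge> real (p k) * real (Rk k div e')"
  shows "Dc n e' \<le> Dc n (p k ^ g * e')"
proof -
  define a where "a = \<alpha> k"
  define q where "q = real (p k)"
  define m where "m = real (Rk k div e')"
  define G where "G = real (Bc (Rk k) e')"
  define f where "f = real (totient (Rk k div e'))"
  define Qp where "Qp = q ^ (a - 1)"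
  have a1: "a \<ge> 1" using g1 g unfolding a_def by simp
  have q1: "q > 1" unfolding q_def using p_gt1[OF k] by simp
  have Qq: "q ^ a = q * Qp" unfolding Qp_def using a1 by (simp flip: power_Suc)
  have fm: "f \<le> m" unfolding f_def m_def by (simp add: totient_le)
  have Kk: "G - q * m + (q - 1) * f \<ge> 0" using K unfolding G_def q_def m_def f_def by linarith
  have D0: "real (Dc n e') = q ^ a * m + (q ^ (a - 1) * (q - 1)) * G - (q ^ (a - 1) * (q - 1)) * f"
  proof -
    have "real (Dc n (p k ^ 0 * e')) = real (p k ^ (\<alpha> k - 0)) * real (Rk k div e')
         + real (Bc (PP k) (p k ^ 0)) * real (Bc (Rk k) e')
         - real (totient (p k ^ (\<alpha> k - 0))) * real (totient (Rk k div e'))"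
      by (rule Dc_split[OF k _ e]) simp
    moreover have "Bc (PP k) (p k ^ 0) = totient (p k ^ \<alpha> k)"
      using Bc_one[OF PP_pos[OF k]] unfolding PP_def by simp
    moreover have "real (totient (p k ^ \<alpha> k)) = q ^ (a - 1) * (q - 1)"
      unfolding q_def a_def using totient_pp_real[OF k] a1 a_def by simp
    ultimately show ?thesis unfolding q_def m_def G_def f_def a_def by simp
  qed
  show ?thesis
  proof (cases "g = a")
    case True
    have D: "real (Dc n (p k ^ g * e')) = m + q ^ a * G - f"
    proof -
      have "real (Dc n (p k ^ g * e')) = real (p k ^ (\<alpha> k - g)) * real (Rk k div e')
           + real (Bc (PP k) (p k ^ g)) * real (Bc (Rk k) e')
           - real (totient (p k ^ (\<alpha> k - g))) * real (totient (Rk k div e'))"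
        by (rule Dc_split[OF k g e])
      moreover have "Bc (PP k) (p k ^ g) = p k ^ \<alpha> k" using True unfolding a_def PP_def by (simp add: Bc_self)
      ultimately show ?thesis using True unfolding q_def m_def G_def f_def a_def by simp
    qed
    have "real (Dc n (p k ^ g * e')) - real (Dc n e') = (m - f) + Qp * (G - q * m + (q - 1) * f)"
      unfolding D D0 Qq Qp_def[symmetric] by (simp add: algebra_simps)
    moreover have "Qp \<ge> 0" unfolding Qp_def using q1 by simp
    ultimately have "real (Dc n (p k ^ g * e')) - real (Dc n e') \<ge> 0"
      using fm Kk by (simp add: add_nonneg_nonneg mult_nonneg_nonneg)
    then show ?thesis by simp
  next
    case False
    then have ga: "g < a" using g unfolding a_def by simp
    define y where "y = q ^ (a - Suc g)"
    have x: "q ^ (a - g) = q * y" unfolding y_def using ga by (simp flip: power_Suc add: Suc_diff_Suc)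
    have yQ: "y \<le> Qp" unfolding y_def Qp_def using q1 ga by (intro power_increasing) auto
    have D: "real (Dc n (p k ^ g * e')) = q * y * m + (q ^ a - y) * G - (y * (q - 1)) * f"
    proof -
      have "real (Dc n (p k ^ g * e')) = real (p k ^ (\<alpha> k - g)) * real (Rk k div e')
           + real (Bc (PP k) (p k ^ g)) * real (Bc (Rk k) e')
           - real (totient (p k ^ (\<alpha> k - g))) * real (totient (Rk k div e'))"
        by (rule Dc_split[OF k g e])
      moreover have "real (Bc (PP k) (p k ^ g)) = q ^ a - y"
        using Bc_primepow_real[OF k] ga unfolding q_def y_def a_def by simp
      moreover have "real (totient (p k ^ (\<alpha> k - g))) = y * (q - 1)"
        using totient_pp_real[OF k, of "\<alpha> k - g"] ga unfolding q_def y_def a_def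
        by (simp add: Suc_diff_Suc)
      moreover have "real (p k ^ (\<alpha> k - g)) = q * y" using x unfolding q_def a_def by simp
      ultimately show ?thesis unfolding m_def G_def f_def by simp
    qed
    have "real (Dc n (p k ^ g * e')) - real (Dc n e') = (Qp - y) * (G - q * m + (q - 1) * f)"
      unfolding D D0 Qq Qp_def[symmetric] by (simp add: algebra_simps)
    then have "real (Dc n (p k ^ g * e')) - real (Dc n e') \<ge> 0"
      using yQ Kk by (simp add: mult_nonneg_nonneg)
    then show ?thesis by simp
  qed
qed

lemma base_step:
  assumes k: "k \<in> {1..r}" and g1: "1 \<le> g" and g: "g \<le> \<alpha> k"
  shows "Dc n (PP k) \<le> Dc n (p k ^ g)"
proof (cases "g = \<alpha> k")
  case True then show ?thesis unfolding PP_def by simp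
next
  case False
  then have ga: "g < \<alpha> k" using g by simp
  define a where "a = \<alpha> k"
  define q where "q = real (p k)"
  define R where "R = real (Rk k)"
  define f where "f = real (totient (Rk k))"
  define y where "y = q ^ (a - Suc g)"
  have q1: "q > 1" unfolding q_def using p_gt1[OF k] by simp
  have fR: "f \<le> R" unfolding f_def R_def by (simp add: totient_le)
  have e1: "1 dvd Rk k" by simp
  have DQ: "real (Dc n (PP k)) = R + q ^ a * f - f"
  proof -
    have "real (Dc n (p k ^ \<alpha> k * 1)) = real (p k ^ (\<alpha> k - \<alpha> k)) * real (Rk k div 1)
         + real (Bc (PP k) (p k ^ \<alpha> k)) * real (Bc (Rk k) 1)
         - real (totient (p k ^ (\<alpha> k - \<alpha> k))) * real (totient (Rk k div 1))"
      by (rule Dc_split[OF k _ e1]) simp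
    moreover have "Bc (PP k) (p k ^ \<alpha> k) = p k ^ \<alpha> k" unfolding PP_def by (simp add: Bc_self)
    moreover have "Bc (Rk k) 1 = totient (Rk k)" by (rule Bc_one[OF Rk_pos])
    ultimately show ?thesis unfolding q_def R_def f_def a_def PP_def by simp
  qed
  have D: "real (Dc n (p k ^ g)) = q * y * R + (q ^ a - y) * f - (y * (q - 1)) * f"
  proof -
    have "real (Dc n (p k ^ g * 1)) = real (p k ^ (\<alpha> k - g)) * real (Rk k div 1)
         + real (Bc (PP k) (p k ^ g)) * real (Bc (Rk k) 1)
         - real (totient (p k ^ (\<alpha> k - g))) * real (totient (Rk k div 1))"
      by (rule Dc_split[OF k g e1])
    moreover have "real (Bc (PP k) (p k ^ g)) = q ^ a - y"
      using Bc_primepow_real[OF k ga] unfolding q_def y_def a_def by simp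
    moreover have "real (totient (p k ^ (\<alpha> k - g))) = y * (q - 1)"
      using totient_pp_real[OF k, of "\<alpha> k - g"] ga unfolding q_def y_def a_def
      by (simp add: Suc_diff_Suc)
    moreover have "real (p k ^ (\<alpha> k - g)) = q * y" unfolding q_def y_def a_def using ga
      by (simp flip: power_Suc add: Suc_diff_Suc)
    moreover have "Bc (Rk k) 1 = totient (Rk k)" by (rule Bc_one[OF Rk_pos])
    ultimately show ?thesis unfolding R_def f_def by simp
  qed
  have y1: "q * y \<ge> 1" unfolding y_def using q1 by (simp flip: power_Suc add: one_le_power)
  have "real (Dc n (p k ^ g)) - real (Dc n (PP k)) = (q * y - 1) * (R - f)"
    unfolding D DQ by (simp add: algebra_simps)
  then have "real (Dc n (p k ^ g)) - real (Dc n (PP k)) \<ge> 0" using y1 fR by simp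
  then show ?thesis by simp
qed

end


context cyc begin

abbreviation "condI \<equiv> 2 * totient (\<Prod>i=1..r. p i) \<ge> (\<Prod>i=1..r. p i)"
abbreviation "condII \<equiv> (\<forall>i\<in>{1..<r}. totient (p (i + 1)) \<ge> r * totient (p i))"

lemma K_holds:
  assumes cond: "condI \<or> condII"
    and k: "k \<in> {1..r}" and j: "j \<in> {1..r}" and kj: "k < j"
    and e: "e' dvd Rk k" and pj: "p j dvd e'"
  shows "real (Bc (Rk k) e') + (real (p k) - 1) * real (totient (Rk k div e')) \<ge> real (p k) * real (Rk k div e')"
proof -
  define q where "q = real (p k)"
  define m where "m = real (Rk k div e')"
  define f where "f = real (totient (Rk k div e'))"
  define G where "G = real (Bc (Rk k) e')"
  define X where "X = (\<Prod>i\<in>{1..r} - {k}. 1 - 1 / real (p i))"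
  have R0: "Rk k > 0" by (rule Rk_pos)
  have e0: "e' > 0" using e R0 by (metis dvd_0_left_iff neq0_conv)
  have q1: "q > 1" unfolding q_def using p_gt1[OF k] by simp
  have hG: "G \<ge> real e' * f"
  proof -
    have "e' * totient (Rk k div e') \<le> Bc (Rk k) e'" by (rule Bc_lower[OF R0 e])
    then show ?thesis unfolding G_def f_def by (metis of_nat_le_iff of_nat_mult)
  qed
  have he: "real e' \<ge> real (p j)" using dvd_imp_le[OF pj e0] by simp
  have pq: "p k < p j" using mono_p[OF k j kj] .
  have md: "Rk k div e' dvd Rk k" using e by (metis dvd_div_mult_self dvd_triv_left)
  have m0: "Rk k div e' > 0" using md R0 by (metis dvd_0_left_iff neq0_conv)
  have pfm: "prime_factors (Rk k div e') \<subseteq> p ` ({1..r} - {k})"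
    using dvd_prime_factors[of "Rk k" "Rk k div e'"] R0 md pf_Rk[OF k] by auto
  have hf: "f \<ge> m * X"
    unfolding f_def m_def X_def by (rule totient_ratio_ge[OF m0 pfm]) auto
  have f0: "f \<ge> 0" unfolding f_def by simp
  have m0r: "m \<ge> 0" unfolding m_def by simp
  have X0: "X \<ge> 0" unfolding X_def
  proof (intro prod_nonneg)
    fix i assume "i \<in> {1..r} - {k}"
    then have "real (p i) \<ge> 1" using p_gt1[of i] by simp
    then show "0 \<le> 1 - 1 / real (p i)" by simp
  qed
  have whole: "(\<Prod>i\<in>{1..r}. 1 - 1 / real (p i)) = (1 - 1 / q) * X"
    unfolding X_def q_def using k by (subst prod.remove[of "{1..r}" k]) auto
  from cond show ?thesis
  proof
    assume ci: condI
    have "(1 - 1 / q) * X \<ge> 1 / 2" using cond_i_prod[OF ci] whole by simp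
    moreover have "(1 - 1 / q) * X \<le> X" using q1 X0 by (simp add: mult_left_le_one_le)
    ultimately have X2: "X \<ge> 1 / 2" by linarith
    have "m * 1 \<le> m * (2 * X)" using X2 m0r by (intro mult_left_mono) auto
    then have fm: "2 * f \<ge> m" using hf by linarith
    have eq: "real e' \<ge> q + 1" using he pq unfolding q_def by simp
    have "q * m \<le> q * (2 * f)" using fm q1 by (simp add: mult_left_mono)
    also have "q * (2 * f) = (q + 1) * f + (q - 1) * f" by (simp add: algebra_simps)
    also have "(q + 1) * f + (q - 1) * f \<le> real e' * f + (q - 1) * f"
      using eq f0 by (simp add: mult_right_mono)
    also have "real e' * f + (q - 1) * f \<le> G + (q - 1) * f" using hG by simp
    finally show ?thesis unfolding G_def q_def f_def m_def by simp
  next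
    assume cii: condII
    have ch: "p j - 1 \<ge> r * (p k - 1)" by (rule chain_ii[OF cii k j kj])
    have ej: "real e' \<ge> real r * (q - 1) + 1"
    proof -
      have "real (p j - 1) \<ge> real (r * (p k - 1))" using ch by (rule of_nat_mono)
      moreover have "real (p j - 1) = real (p j) - 1" using pq by simp
      moreover have "real (p k - 1) = q - 1" unfolding q_def using p_gt1[OF k] by simp
      ultimately show ?thesis using he by simp
    qed
    have "(1 - 1 / q) * X \<ge> 1 / real (r + 1)" using prod_all_ge whole by simp
    then have "(real r + 1) * ((1 - 1 / q) * X) \<ge> (real r + 1) * (1 / real (r + 1))"
      by (intro mult_left_mono) auto
    moreover have "(real r + 1) * (1 / real (r + 1)) = 1" by simp
    ultimately have "(real r + 1) * ((1 - 1 / q) * X) \<ge> 1" by linarith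
    then have "q * ((real r + 1) * ((1 - 1 / q) * X)) \<ge> q * 1" using q1 by (intro mult_left_mono) auto
    moreover have "q * ((real r + 1) * ((1 - 1 / q) * X)) = (real r + 1) * (q * (1 - 1 / q)) * X"
      by (simp add: algebra_simps)
    moreover have "q * (1 - 1 / q) = q - 1" using q1 by (simp add: field_simps)
    ultimately have XX: "(real r + 1) * (q - 1) * X \<ge> q" by simp
    have "m * q \<le> m * ((real r + 1) * (q - 1) * X)" using XX m0r by (simp add: mult_left_mono)
    also have "m * ((real r + 1) * (q - 1) * X) = ((real r + 1) * (q - 1)) * (m * X)" by (simp add: algebra_simps)
    also have "((real r + 1) * (q - 1)) * (m * X) \<le> ((real r + 1) * (q - 1)) * f"
      using hf q1 by (intro mult_left_mono) auto
    also have "((real r + 1) * (q - 1)) * f \<le> (real e' + q - 1) * f"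
      using ej f0 by (intro mult_right_mono) (auto simp: algebra_simps)
    also have "(real e' + q - 1) * f = real e' * f + (q - 1) * f" by (simp add: algebra_simps)
    also have "real e' * f + (q - 1) * f \<le> G + (q - 1) * f" using hG by simp
    finally show ?thesis unfolding G_def q_def f_def m_def by (simp add: mult.commute)
  qed
qed

lemma lemA:
  assumes cond: "condI \<or> condII"
  shows "e dvd n \<Longrightarrow> 1 < e \<Longrightarrow> \<exists>k\<in>{1..r}. Dc n (PP k) \<le> Dc n e"
proof (induction e rule: less_induct)
  case (less e)
  have e0: "e > 0" using less.prems by simp
  obtain q0 where q0: "prime q0" "q0 dvd e" using prime_factor_nat[of e] less.prems by auto
  have "q0 \<in> prime_factors e" using q0 e0 by (simp add: in_prime_factors_iff)
  then have pfne: "prime_factors e \<noteq> {}" by blast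
  define q where "q = Min (prime_factors e)"
  have qin: "q \<in> prime_factors e" unfolding q_def using pfne by (intro Min_in) auto
  have qp: "prime q" "q dvd e" using qin by (auto simp: in_prime_factors_iff)
  have qn: "q dvd n" using qp(2) less.prems(1) by (rule dvd_trans)
  obtain k where k: "k \<in> {1..r}" "q = p k" using prime_dvd_n[OF qp(1) qn] by blast
  define g where "g = multiplicity q e"
  define e' where "e' = e div q ^ g"
  have dec: "e = q ^ g * e'" unfolding e'_def g_def by (simp add: multiplicity_dvd)
  have nq: "\<not> q dvd e'" unfolding e'_def g_def
    by (rule multiplicity_decompose) (use e0 qp(1) not_prime_unit in auto)
  have g1: "g \<ge> 1"
  proof (rule ccontr)
    assume "\<not> g \<ge> 1"
    then have "g = 0" by simp
    then have "e' = e" unfolding e'_def by simp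
    then show False using nq qp by simp
  qed
  have e'0: "e' > 0"
  proof (rule ccontr)
    assume "\<not> e' > 0" then have "e' = 0" by simp
    then show False using dec e0 by simp
  qed
  have "e' dvd e" using dec by simp
  then have e'n: "e' dvd n" using less.prems(1) by (rule dvd_trans)
  have cq: "coprime e' (PP k)" unfolding PP_def k(2)[symmetric]
    by (rule prime_imp_power_coprime_nat[OF qp(1) nq])
  have "e' dvd PP k * Rk k" using e'n n_split[OF k(1)] by simp
  then have e'R: "e' dvd Rk k" using coprime_dvd_mult_right_iff[OF cq] by simp
  have cR: "coprime (q ^ g) (Rk k)"
    using prime_imp_coprime_nat[OF qp(1)] p_not_dvd_Rk[OF k(1)] k(2) by (simp add: coprime_power_left_iff)
  have "q ^ g dvd e" using dec by simp
  then have qgn: "q ^ g dvd n" using less.prems(1) by (rule dvd_trans)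
  then have "q ^ g dvd PP k * Rk k" using n_split[OF k(1)] by simp
  then have qgQ: "q ^ g dvd PP k" using coprime_dvd_mult_left_iff[OF cR] by simp
  have q2: "2 \<le> q" using qp(1) prime_ge_2_nat by blast
  have ga: "g \<le> \<alpha> k" using qgQ unfolding PP_def k(2)[symmetric] using dvd_power_iff_le[OF q2] by simp
  show ?case
  proof (cases "e' = 1")
    case True
    then have "e = p k ^ g" using dec k(2) by simp
    then show ?thesis using base_step[OF k(1) g1 ga] k(1) by auto
  next
    case False
    then have e'1: "1 < e'" using e'0 by simp
    obtain q' where q': "prime q'" "q' dvd e'" using prime_factor_nat[of e'] False by auto
    have "q' dvd e" using q'(2) \<open>e' dvd e\<close> by (rule dvd_trans)
    then have "q' \<in> prime_factors e" using q'(1) e0 by (auto simp: in_prime_factors_iff)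
    then have "q \<le> q'" unfolding q_def by (intro Min_le) auto
    moreover have "q' \<noteq> q" using q'(2) nq by auto
    ultimately have qq: "q < q'" by simp
    have "q' dvd n" using q'(2) e'n by (rule dvd_trans)
    then obtain j where j: "j \<in> {1..r}" "q' = p j" using prime_dvd_n[OF q'(1)] by blast
    have kj: "k < j" using qq k j mono_p_iff by auto
    have K: "real (Bc (Rk k) e') + (real (p k) - 1) * real (totient (Rk k div e')) \<ge> real (p k) * real (Rk k div e')"
      by (rule K_holds[OF cond k(1) j(1) kj e'R]) (use q'(2) j(2) in simp)
    have rs: "Dc n e' \<le> Dc n e" using raise_step[OF k(1) g1 ga e'R K] dec k(2) by simp
    have "q ^ 1 \<le> q ^ g" using q2 g1 by (intro power_increasing) auto
    then have "2 \<le> q ^ g" using q2 by simp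
    then have "2 * e' \<le> q ^ g * e'" by (rule mult_right_mono) simp
    moreover have "e' < 2 * e'" using e'0 by simp
    ultimately have lt: "e' < e" using dec by simp
    obtain k' where k': "k' \<in> {1..r}" "Dc n (PP k') \<le> Dc n e'" using less.IH[OF lt e'n e'1] by blast
    then show ?thesis using rs by (meson order.trans)
  qed
qed

end


context cyc begin

lemma cand_formula:
  assumes s: "s \<in> {1..r}"
  shows "real (Dc n (PP s)) = real (Rk s) + real (PP s) * real (totient (Rk s)) - real (totient (Rk s))"
proof -
  have "real (Dc n (p s ^ \<alpha> s * 1)) = real (p s ^ (\<alpha> s - \<alpha> s)) * real (Rk s div 1)
         + real (Bc (PP s) (p s ^ \<alpha> s)) * real (Bc (Rk s) 1)
         - real (totient (p s ^ (\<alpha> s - \<alpha> s))) * real (totient (Rk s div 1))"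
    by (rule Dc_split[OF s]) simp_all
  moreover have "Bc (PP s) (p s ^ \<alpha> s) = PP s" unfolding PP_def by (simp add: Bc_self)
  moreover have "Bc (Rk s) 1 = totient (Rk s)" by (rule Bc_one[OF Rk_pos])
  ultimately show ?thesis unfolding PP_def by simp
qed

lemma pair_split:
  assumes j: "j \<in> {1..r}" and t: "t \<in> {1..r}" and jt: "j \<noteq> t"
  shows "Rk j = PP t * PI ({1..r} - {j, t})" "coprime (PP t) (PI ({1..r} - {j, t}))"
proof -
  have "{1..r} - {j} = insert t ({1..r} - {j, t})" using t jt by auto
  then show "Rk j = PP t * PI ({1..r} - {j, t})" unfolding Rk_def
    by (simp add: PI_insert)
  show "coprime (PP t) (PI ({1..r} - {j, t}))" by (rule coprime_PP_PI[OF t]) auto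
qed

lemma PP_real: "s \<in> {1..r} \<Longrightarrow> real (PP s) = real (p s) * real (p s) ^ (\<alpha> s - 1)"
proof -
  assume s: "s \<in> {1..r}"
  then have "\<alpha> s \<ge> 1" using pos by blast
  then have "\<alpha> s = Suc (\<alpha> s - 1)" by simp
  then have "PP s = p s * p s ^ (\<alpha> s - 1)" unfolding PP_def by (metis power_Suc)
  then show ?thesis by simp
qed

lemma totient_PP_real: "s \<in> {1..r} \<Longrightarrow> real (totient (PP s)) = (real (p s) - 1) * real (p s) ^ (\<alpha> s - 1)"
proof -
  assume s: "s \<in> {1..r}"
  then have "\<alpha> s \<ge> 1" using pos by blast
  then show ?thesis unfolding PP_def using totient_pp_real[OF s] by (simp add: mult.commute)
qed

lemma diff_identity:
  fixes a b P' Q' M \<mu> :: real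
  shows "(b*Q')*M + (a*P')*((b-1)*Q'*\<mu>) - (b-1)*Q'*\<mu> - ((a*P')*M + (b*Q')*((a-1)*P'*\<mu>) - (a-1)*P'*\<mu>)
         = (M - \<mu>)*(b*Q' - a*P') + \<mu>*(P'*Q'*(b-a) + Q' - P')"
  by (simp add: algebra_simps)

lemma lemB:
  assumes cond: "condI \<or> condII"
    and t: "t \<in> {2..r}" and tmax: "\<forall>i\<in>{2..r}. \<alpha> i \<le> \<alpha> t"
    and tlast: "\<forall>i\<in>{2..r}. \<alpha> i = \<alpha> t \<longrightarrow> i \<le> t"
    and j: "j \<in> {1..r}" and jt: "j < t"
  shows "Dc n (PP t) \<le> Dc n (PP j)"
proof -
  have t1: "t \<in> {1..r}" using t by auto
  have jt': "j \<noteq> t" using jt by simp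
  have at1: "\<alpha> t \<ge> 1" using pos t1 by blast
  define M0 where "M0 = PI ({1..r} - {j, t})"
  have M0pos: "M0 > 0" unfolding M0_def by (rule PI_pos) auto
  have sj: "Rk j = PP t * M0" "coprime (PP t) M0" using pair_split[OF j t1 jt'] unfolding M0_def by auto
  have st: "Rk t = PP j * M0" "coprime (PP j) M0" using pair_split[OF t1 j jt'[symmetric]] unfolding M0_def
    by (auto simp: insert_commute)
  define p0 where "p0 = real (p j)"
  define q0 where "q0 = real (p t)"
  define P' where "P' = p0 ^ (\<alpha> j - 1)"
  define Q' where "Q' = q0 ^ (\<alpha> t - 1)"
  define M where "M = real M0"
  define \<mu> where "\<mu> = real (totient M0)"
  have p2: "p0 \<ge> 2" unfolding p0_def using p_gt1[OF j] by simp
  have pq: "p0 < q0" unfolding p0_def q0_def using mono_p[OF j t1 jt] by simp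
  have pq1: "p0 + 1 \<le> q0" unfolding p0_def q0_def using mono_p[OF j t1 jt] by simp
  have P1: "P' \<ge> 1" unfolding P'_def using p2 by simp
  have Q1: "Q' \<ge> 1" unfolding Q'_def using pq p2 by simp
  have \<mu>M: "\<mu> \<le> M" unfolding \<mu>_def M_def by (simp add: totient_le)
  have \<mu>0: "\<mu> \<ge> 0" unfolding \<mu>_def by simp
  have PPj: "real (PP j) = p0 * P'" unfolding p0_def P'_def by (rule PP_real[OF j])
  have PPt: "real (PP t) = q0 * Q'" unfolding q0_def Q'_def by (rule PP_real[OF t1])
  have tPj: "real (totient (PP j)) = (p0 - 1) * P'" unfolding p0_def P'_def by (rule totient_PP_real[OF j])
  have tPt: "real (totient (PP t)) = (q0 - 1) * Q'" unfolding q0_def Q'_def by (rule totient_PP_real[OF t1])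
  have Cj: "real (Dc n (PP j)) = (q0*Q')*M + (p0*P')*((q0-1)*Q'*\<mu>) - (q0-1)*Q'*\<mu>"
  proof -
    have "totient (Rk j) = totient (PP t) * totient M0" using sj by (simp add: totient_mult_coprime)
    then show ?thesis using cand_formula[OF j] sj(1) PPj PPt tPt unfolding M_def \<mu>_def by simp
  qed
  have Ct: "real (Dc n (PP t)) = (p0*P')*M + (q0*Q')*((p0-1)*P'*\<mu>) - (p0-1)*P'*\<mu>"
  proof -
    have "totient (Rk t) = totient (PP j) * totient M0" using st by (simp add: totient_mult_coprime)
    then show ?thesis using cand_formula[OF t1] st(1) PPj PPt tPj unfolding M_def \<mu>_def by simp
  qed
  define Z where "Z = P'*Q'*(q0-p0) + Q' - P'"
  have diff: "real (Dc n (PP j)) - real (Dc n (PP t)) = (M - \<mu>)*(q0*Q' - p0*P') + \<mu>*Z"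
    unfolding Cj Ct Z_def by (rule diff_identity)
  have Zge: "Z \<ge> P'*Q'*(q0-p0) - P'" unfolding Z_def using Q1 by simp
  have PQ1: "P'*Q'*(q0-p0) \<ge> P'"
  proof -
    have "1 * 1 \<le> Q' * (q0 - p0)" using Q1 pq1 by (intro mult_mono) auto
    then have "P' * 1 \<le> P' * (Q' * (q0 - p0))" using P1 by (intro mult_left_mono) auto
    then show ?thesis by (simp add: algebra_simps)
  qed
  have Z0: "Z \<ge> 0" using Zge PQ1 by simp
  have goal: "(M - \<mu>)*(q0*Q' - p0*P') + \<mu>*Z \<ge> 0"
  proof (cases "p0*P' \<le> q0*Q'")
    case True
    then show ?thesis using \<mu>M \<mu>0 Z0 by (simp add: add_nonneg_nonneg mult_nonneg_nonneg)
  next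
    case False
    then have PgQ: "p0*P' > q0*Q'" by simp
    have j1: "j = 1"
    proof (rule ccontr)
      assume "j \<noteq> 1"
      then have j2: "j \<in> {2..r}" using j by auto
      then have aj: "\<alpha> j \<le> \<alpha> t" using tmax by blast
      have "p j ^ \<alpha> j \<le> p j ^ \<alpha> t" using aj p_gt1[OF j] by (intro power_increasing) auto
      also have "p j ^ \<alpha> t < p t ^ \<alpha> t"
        using mono_p[OF j t1 jt] at1 by (intro power_strict_mono) auto
      finally have "PP j < PP t" unfolding PP_def .
      then have "real (PP j) < real (PP t)" by (simp only: of_nat_less_iff)
      then show False using PgQ PPj PPt by simp
    qed
    show ?thesis
    proof (cases "\<alpha> t = 1")
      case True
      have all1: "\<forall>i\<in>{2..r}. \<alpha> i = 1"
      proof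
        fix i assume i: "i \<in> {2..r}"
        then have "\<alpha> i \<le> 1" using tmax True by auto
        moreover have "\<alpha> i \<ge> 1" using pos i by auto
        ultimately show "\<alpha> i = 1" by simp
      qed
      have tr: "t = r" using tlast all1 True t r2 by (metis atLeastAtMost_iff le_antisym order_refl)
      have Q'1: "Q' = 1" unfolding Q'_def using True by simp
      have set: "{1..r} - {j, t} = {2..r-1}" using j1 tr r2 by auto
      have rm1: "r - 1 \<in> {1..r}" "r \<in> {1..r}" "r - 1 < r" "1 \<le> r - 1" "r - 1 \<le> r" using r2 by auto
      have pfM: "prime_factors M0 \<subseteq> p ` {2..r-1}" unfolding M0_def set by (subst pf_PI) auto
      have ratio: "\<mu> \<ge> M * (\<Prod>i\<in>{2..r-1}. 1 - 1 / real (p i))"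
        unfolding \<mu>_def M_def by (rule totient_ratio_ge[OF M0pos pfM]) auto
      have tel: "(\<Prod>i\<in>{2..r-1}. 1 - 1 / real (p i)) \<ge> real (p 1) / real (p (r-1))"
        using telescope[OF rm1(4) rm1(5)] .
      have pr1: "real (p (r-1)) \<le> q0 - 1"
      proof -
        have "p (r-1) < p r" using mono_p[OF rm1(1) rm1(2) rm1(3)] .
        then show ?thesis unfolding q0_def tr by simp
      qed
      have pr0: "real (p (r-1)) > 0" using p_gt1[OF rm1(1)] by simp
      have M0r: "M \<ge> 0" unfolding M_def by simp
      have key: "(q0 - 1) * \<mu> \<ge> p0 * M"
      proof -
        have "M * (real (p 1) / real (p (r-1))) \<le> M * (\<Prod>i\<in>{2..r-1}. 1 - 1 / real (p i))"
          by (rule mult_left_mono[OF tel M0r])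
        then have "\<mu> \<ge> M * (real (p 1) / real (p (r-1)))" using ratio by linarith
        then have "real (p (r-1)) * \<mu> \<ge> real (p (r-1)) * (M * (real (p 1) / real (p (r-1))))"
          using pr0 by (intro mult_left_mono) auto
        then have "real (p (r-1)) * \<mu> \<ge> p0 * M" using pr0 j1 unfolding p0_def by (simp add: field_simps)
        moreover have "real (p (r-1)) * \<mu> \<le> (q0 - 1) * \<mu>" using pr1 \<mu>0 by (intro mult_right_mono) auto
        ultimately show ?thesis by linarith
      qed
      have A: "(M - \<mu>) * (p0*P' - q0) \<le> (M - \<mu>) * (p0*P')"
        using \<mu>M pq p2 by (intro mult_left_mono) auto
      have B: "(M - \<mu>) * (p0*P') = (p0 * (M - \<mu>)) * P'" by (simp add: algebra_simps)
      have C: "p0 * (M - \<mu>) \<le> (q0 - 1 - p0) * \<mu>" using key by (simp add: algebra_simps)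
      have D: "(p0 * (M - \<mu>)) * P' \<le> ((q0 - 1 - p0) * \<mu>) * P'" using C P1 by (intro mult_right_mono) auto
      have "(M - \<mu>)*(q0*Q' - p0*P') + \<mu>*Z = \<mu>*Z - (M - \<mu>) * (p0*P' - q0)"
        using Q'1 by (simp add: algebra_simps)
      also have "\<dots> \<ge> \<mu>*Z - ((q0 - 1 - p0) * \<mu>) * P'" using A B D by linarith
      also have "\<mu>*Z - ((q0 - 1 - p0) * \<mu>) * P' = \<mu>"
        unfolding Z_def Q'1 by (simp add: algebra_simps)
      finally show ?thesis using \<mu>0 by linarith
    next
      case False
      then have at2: "\<alpha> t \<ge> 2" using pos t1 by fastforce
      have Qq: "Q' \<ge> q0"
      proof -
        have "q0 ^ 1 \<le> q0 ^ (\<alpha> t - 1)" by (rule power_increasing) (use at2 pq p2 in auto)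
        then show ?thesis unfolding Q'_def by simp
      qed
      from cond show ?thesis
      proof
        assume ci: condI
        have pfM: "prime_factors M0 \<subseteq> p ` {1..r}" unfolding M0_def by (subst pf_PI) auto
        have "\<mu> \<ge> M * (\<Prod>i\<in>{1..r}. 1 - 1 / real (p i))"
          unfolding \<mu>_def M_def by (rule totient_ratio_ge[OF M0pos pfM]) auto
        moreover have "M * (\<Prod>i\<in>{1..r}. 1 - 1 / real (p i)) \<ge> M * (1/2)"
          using cond_i_prod[OF ci] by (intro mult_left_mono) (auto simp: M_def)
        ultimately have M2: "M \<le> 2 * \<mu>" by linarith
        have A: "(M - \<mu>)*(q0*Q' - p0*P') \<ge> \<mu> * (q0*Q' - p0*P')"
        proof -
          have "(M - \<mu>) * (p0*P' - q0*Q') \<le> \<mu> * (p0*P' - q0*Q')"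
            using M2 PgQ by (intro mult_right_mono) auto
          then show ?thesis by (simp add: algebra_simps)
        qed
        have "Z - (p0*P' - q0*Q') \<ge> 0"
        proof -
          have "P'*Q'*(q0-p0) \<ge> P' * q0"
          proof -
            have "Q' * (q0 - p0) \<ge> q0 * 1" using Qq pq1 Q1 by (intro mult_mono) auto
            then have "P' * (Q' * (q0 - p0)) \<ge> P' * q0" using P1 by (intro mult_left_mono) auto
            then show ?thesis by (simp add: algebra_simps)
          qed
          moreover have "P' * q0 \<ge> P' * (p0 + 1)" using pq1 P1 by (intro mult_left_mono) auto
          moreover have "Z - (p0*P' - q0*Q') = (P'*Q'*(q0-p0) - P'*q0) + (P'*q0 - P'*(p0+1)) + Q' + q0*Q'"
            unfolding Z_def by (simp add: algebra_simps)
          moreover have "q0*Q' \<ge> 0" using Q1 pq p2 by simp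
          ultimately show ?thesis using Q1 by linarith
        qed
        then have "\<mu> * (Z - (p0*P' - q0*Q')) \<ge> 0" using \<mu>0 by simp
        then show ?thesis using A by (simp add: algebra_simps)
      next
        assume cii: condII
        have ch: "p t - 1 \<ge> r * (p 1 - 1)" using chain_ii[OF cii _ t1, of 1] jt j1 r2 by simp
        have chr: "q0 - 1 \<ge> real r * (p0 - 1)"
        proof -
          have "real (p t - 1) \<ge> real (r * (p 1 - 1))" using ch by (rule of_nat_mono)
          moreover have "real (p t - 1) = q0 - 1" unfolding q0_def using p_gt1[OF t1] by simp
          moreover have "real (p 1 - 1) = p0 - 1" unfolding p0_def j1 using p_gt1[OF j] j1 by simp
          ultimately show ?thesis by simp
        qed
        have sub: "{1..r} - {j, t} \<subseteq> {2..r}" using j1 by auto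
        have pfM: "prime_factors M0 \<subseteq> p ` {2..r}" unfolding M0_def using sub
          by (subst pf_PI) auto
        have "\<mu> \<ge> M * (\<Prod>i\<in>{2..r}. 1 - 1 / real (p i))"
          unfolding \<mu>_def M_def by (rule totient_ratio_ge[OF M0pos pfM]) auto
        moreover have "M * (\<Prod>i\<in>{2..r}. 1 - 1 / real (p i)) \<ge> M * (2 / real (r + 1))"
          using prod_2_ge by (intro mult_left_mono) (auto simp: M_def)
        ultimately have "\<mu> \<ge> M * (2 / real (r + 1))" by linarith
        then have M2: "2 * M \<le> (real r + 1) * \<mu>" by (simp add: field_simps)
        have rr: "real r \<ge> 2" using r2 by simp
        have qp: "q0 - p0 \<ge> (real r - 1) * p0 / 2"
        proof -
          have "q0 - p0 \<ge> (real r - 1) * (p0 - 1)" using chr by (simp add: algebra_simps)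
          moreover have "(real r - 1) * (p0 - 1) \<ge> (real r - 1) * (p0 / 2)"
            using rr p2 by (intro mult_left_mono) auto
          ultimately show ?thesis by simp
        qed
        have q3: "q0 \<ge> 3" using pq1 p2 by simp
        have Zb: "Z \<ge> P' * (q0 * (q0 - p0) - 1)"
        proof -
          have "Q' * (q0 - p0) \<ge> q0 * (q0 - p0)" using Qq pq by (intro mult_right_mono) auto
          then have "P' * (Q' * (q0 - p0)) \<ge> P' * (q0 * (q0 - p0))" using P1 by (intro mult_left_mono) auto
          then show ?thesis using Zge by (simp add: algebra_simps)
        qed
        have W: "q0 * (q0 - p0) - 1 \<ge> (real r - 1) * p0 / 2"
        proof -
          define Y where "Y = q0 * (q0 - p0)"
          define X where "X = (real r - 1) * p0"
          have "Y \<ge> 3 * (q0 - p0)" unfolding Y_def using q3 pq by (intro mult_right_mono) auto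
          moreover have "1 * 2 \<le> X" unfolding X_def using rr p2 by (intro mult_mono) auto
          moreover have "X / 2 \<le> q0 - p0" using qp unfolding X_def .
          ultimately have "Y - 1 \<ge> X / 2" by argo
          then show ?thesis unfolding X_def Y_def .
        qed
        have Z2: "2 * Z \<ge> (real r - 1) * (p0 * P')"
        proof -
          have "P' * ((real r - 1) * p0) \<le> P' * (2 * (q0 * (q0 - p0) - 1))"
            using W P1 by (intro mult_left_mono) auto
          also have "P' * (2 * (q0 * (q0 - p0) - 1)) = 2 * (P' * (q0 * (q0 - p0) - 1))" by simp
          also have "2 * (P' * (q0 * (q0 - p0) - 1)) \<le> 2 * Z" using Zb by simp
          finally show ?thesis by (simp add: algebra_simps)
        qed
        have A: "2 * ((M - \<mu>) * (p0*P' - q0*Q')) \<le> ((real r - 1) * \<mu>) * (p0*P' - q0*Q')"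
        proof -
          have "2 * (M - \<mu>) \<le> (real r - 1) * \<mu>" using M2 by (simp add: algebra_simps)
          then have "(2 * (M - \<mu>)) * (p0*P' - q0*Q') \<le> ((real r - 1) * \<mu>) * (p0*P' - q0*Q')"
            using PgQ by (intro mult_right_mono) auto
          then show ?thesis by (simp only: mult.assoc)
        qed
        have B: "((real r - 1) * \<mu>) * (p0*P' - q0*Q') \<le> ((real r - 1) * \<mu>) * (p0*P')"
          using rr \<mu>0 Q1 pq p2 by (intro mult_left_mono) auto
        have C: "((real r - 1) * \<mu>) * (p0*P') \<le> \<mu> * (2 * Z)"
        proof -
          have "\<mu> * ((real r - 1) * (p0 * P')) \<le> \<mu> * (2 * Z)" using Z2 \<mu>0 by (intro mult_left_mono) auto
          then show ?thesis by (simp add: algebra_simps)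
        qed
        have "2 * ((M - \<mu>) * (p0*P' - q0*Q')) \<le> 2 * (\<mu> * Z)" using A B C by simp
        then show ?thesis by (simp add: algebra_simps)
      qed
    qed
  qed
  then have "real (Dc n (PP j)) - real (Dc n (PP t)) \<ge> 0" using diff by simp
  then show ?thesis by simp
qed

end


context cyc begin

lemma PP_dvd_n: "s \<in> {1..r} \<Longrightarrow> PP s dvd n"
proof -
  assume s: "s \<in> {1..r}"
  have "n = PP s * Rk s" by (rule n_split[OF s])
  then show ?thesis by simp
qed

lemma PP_less_n: "s \<in> {1..r} \<Longrightarrow> PP s < n"
proof -
  assume s: "s \<in> {1..r}"
  obtain i where i: "i \<in> {1..r}" "i \<noteq> s"
  proof (cases "s = 1")
    case True then show ?thesis using that[of 2] r2 by auto
  next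
    case False then show ?thesis using that[of 1] r2 s by auto
  qed
  have "Rk s = PP i * PI ({1..r} - {s, i})" using pair_split[OF s i(1)] i(2) by auto
  moreover have "PP i > 1"
  proof -
    have "\<alpha> i \<ge> 1" using pos i(1) by blast
    then show ?thesis unfolding PP_def using p_gt1[OF i(1)] by (intro one_less_power) auto
  qed
  moreover have "PI ({1..r} - {s, i}) > 0" by (rule PI_pos) auto
  ultimately have "PP i * 1 \<le> Rk s" by simp
  then have R1: "Rk s > 1" using \<open>PP i > 1\<close> by simp
  have "n = PP s * Rk s" by (rule n_split[OF s])
  then show ?thesis using R1 PP_pos[OF s] by simp
qed

lemma deg_PP: "s \<in> {1..r} \<Longrightarrow> pg_deg n (p s ^ \<alpha> s) + 1 = Dc n (PP s)"
proof -
  assume s: "s \<in> {1..r}"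
  have "pg_deg n (PP s) + 1 = Dc n (gcd (PP s) n)" by (rule pg_deg_Dc[OF n_pos PP_less_n[OF s]])
  moreover have "gcd (PP s) n = PP s" using PP_dvd_n[OF s] by (simp add: gcd_proj1_iff)
  ultimately show ?thesis unfolding PP_def by simp
qed

lemma main_bound:
  assumes cond: "condI \<or> condII"
    and t: "t \<in> {2..r}" and tmax: "\<forall>i\<in>{2..r}. \<alpha> i \<le> \<alpha> t"
    and tlast: "\<forall>i\<in>{2..r}. \<alpha> i = \<alpha> t \<longrightarrow> i \<le> t"
    and a: "a < n"
  shows "\<exists>s\<in>{t..r}. pg_deg n (p s ^ \<alpha> s) \<le> pg_deg n a"
proof -
  have t1: "t \<in> {1..r}" using t by auto
  define e where "e = gcd a n"
  have ed: "e dvd n" unfolding e_def by simp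
  have e0: "e > 0" unfolding e_def using n_pos by simp
  have da: "pg_deg n a + 1 = Dc n e" unfolding e_def by (rule pg_deg_Dc[OF n_pos a])
  have "\<exists>s\<in>{t..r}. Dc n (PP s) \<le> Dc n e"
  proof (cases "e = 1")
    case True
    have "Dc n e = n" unfolding True by (rule Dc_one)
    then show ?thesis using Dc_le[of n "PP t"] t by auto
  next
    case False
    then have "1 < e" using e0 by simp
    then obtain k where k: "k \<in> {1..r}" "Dc n (PP k) \<le> Dc n e" using lemA[OF cond ed] by blast
    show ?thesis
    proof (cases "k < t")
      case True
      then have "Dc n (PP t) \<le> Dc n (PP k)" by (rule lemB[OF cond t tmax tlast k(1)])
      then have "Dc n (PP t) \<le> Dc n e" using k(2) by simp
      moreover have "t \<in> {t..r}" using t by simp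
      ultimately show ?thesis by blast
    next
      case False
      then show ?thesis using k by auto
    qed
  qed
  then obtain s where s: "s \<in> {t..r}" "Dc n (PP s) \<le> Dc n e" by blast
  have s1: "s \<in> {1..r}" using s t by auto
  show ?thesis using s deg_PP[OF s1] da by (intro bexI[of _ s]) auto
qed

end

theorem theorem1p3:
  fixes n r :: nat and p \<alpha> :: "nat \<Rightarrow> nat"
  assumes r2: "r \<ge> 2"
    and primes: "\<forall>i\<in>{1..r}. prime (p i)"
    and incr: "\<forall>i\<in>{1..<r}. p i < p (i + 1)"
    and pos: "\<forall>i\<in>{1..r}. \<alpha> i \<ge> 1"
    and n_def: "n = (\<Prod>i=1..r. p i ^ \<alpha> i)"
    and cond: "2 * totient (\<Prod>i=1..r. p i) \<ge> (\<Prod>i=1..r. p i)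
               \<or> (\<forall>i\<in>{1..<r}. totient (p (i + 1)) \<ge> r * totient (p i))"
    and t_def: "t = Max {t\<in>{2..r}. \<forall>j\<in>{2..r}. \<alpha> t \<ge> \<alpha> j}"
  shows "pg_min_deg n = Min {pg_deg n (p s ^ \<alpha> s) | s. s \<in> {t..r}}"
proof -
  interpret cyc n r p \<alpha> using r2 primes incr pos n_def by unfold_locales
  define T where "T = {t\<in>{2..r}. \<forall>j\<in>{2..r}. \<alpha> t \<ge> \<alpha> j}"
  have finT: "finite T" unfolding T_def by simp
  have "T \<noteq> {}"
  proof -
    have fin: "finite (\<alpha> ` {2..r})" by simp
    have ne: "\<alpha> ` {2..r} \<noteq> {}" using r2 by auto
    obtain t0 where t0: "t0 \<in> {2..r}" "\<alpha> t0 = Max (\<alpha> ` {2..r})"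
      using Max_in[OF fin ne] by auto
    have "\<forall>j\<in>{2..r}. \<alpha> t0 \<ge> \<alpha> j" using t0(2) fin by auto
    then have "t0 \<in> T" unfolding T_def using t0(1) by auto
    then show ?thesis by auto
  qed
  then have tT: "t \<in> T" unfolding t_def T_def[symmetric] using finT by (intro Max_in) auto
  have t: "t \<in> {2..r}" and tmax: "\<forall>i\<in>{2..r}. \<alpha> i \<le> \<alpha> t" using tT unfolding T_def by auto
  have tlast: "\<forall>i\<in>{2..r}. \<alpha> i = \<alpha> t \<longrightarrow> i \<le> t"
  proof (intro ballI impI)
    fix i assume i: "i \<in> {2..r}" "\<alpha> i = \<alpha> t"
    then have "i \<in> T" unfolding T_def using tmax by auto
    then show "i \<le> t" unfolding t_def T_def[symmetric] using finT by (intro Max_ge) auto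
  qed
  define S where "S = {pg_deg n (p s ^ \<alpha> s) | s. s \<in> {t..r}}"
  have finS: "finite S" unfolding S_def by simp
  have neS: "S \<noteq> {}" unfolding S_def using t by auto
  have n0: "n > 0" by (rule n_pos)
  let ?I = "pg_deg n ` {0..<n}"
  have finI: "finite ?I" by simp
  have neI: "?I \<noteq> {}" using n0 by auto
  have le1: "Min ?I \<le> Min S"
  proof -
    obtain s where s: "s \<in> {t..r}" "Min S = pg_deg n (p s ^ \<alpha> s)"
      using Min_in[OF finS neS] unfolding S_def by auto
    have s1: "s \<in> {1..r}" using s t by auto
    have "p s ^ \<alpha> s < n" using PP_less_n[OF s1] unfolding PP_def .
    then have "pg_deg n (p s ^ \<alpha> s) \<in> ?I" by auto
    then show ?thesis using s(2) finI by (simp add: Min_le)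
  qed
  have le2: "Min S \<le> Min ?I"
  proof -
    obtain a where a: "a \<in> {0..<n}" "Min ?I = pg_deg n a" using Min_in[OF finI neI] by auto
    have an: "a < n" using a(1) by simp
    have "\<exists>s\<in>{t..r}. pg_deg n (p s ^ \<alpha> s) \<le> pg_deg n a" by (rule main_bound[OF cond t tmax tlast an])
    then obtain s where s: "s \<in> {t..r}" "pg_deg n (p s ^ \<alpha> s) \<le> pg_deg n a" by blast
    have "pg_deg n (p s ^ \<alpha> s) \<in> S" unfolding S_def using s(1) by auto
    then have "Min S \<le> pg_deg n (p s ^ \<alpha> s)" using finS by (simp add: Min_le)
    then show ?thesis using s(2) a(2) by simp
  qed
  show ?thesis unfolding pg_min_deg_def S_def[symmetric] using le1 le2 by simp
qed


end
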